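(* In the setting of the context, let $h:\mathbb{R}^{p_z}\to\mathbb{R}$ be measurable with $h(Z)$ non-degenerate (not almost surely constant), and let $V=[h(Z),\,U-h(Z)]'\in\mathbb{R}^2$, with all expectations involved finite. Suppose $K$ has the omnibus property. Then $V$ satisfies Condition 1 and Condition 2. In particular, under $\mathbb{H}_o$, $\mu_V(Z)=h(Z)[1,-1]'$ is not almost surely zero, and under $\mathbb{H}_a$, $\delta_V\neq0$.
   Context: Let $\nu$ be a measure on $\mathbb{R}^{p_z}$ symmetric about the origin and $K(z)=\int_{\mathbb{R}^{p_z}}(1-\cos(z's))\nu(ds)$ (so $K(-z)=K(z)$). Let $U\in\mathbb{R}$ with $\mathbb{E}U=0$, $Z\in\mathbb{R}^{p_z}$, $V\in\mathbb{R}^{p_v}$ be jointly distributed, $D=(U,V,Z)$, and $D^\dagger=(U^\dagger,V^\dagger,Z^\dagger)$ an independent copy of $D$. Define $\mathrm{GMDD}(U|Z)=-\mathbb{E}[UU^\dagger K(Z-Z^\dagger)]$, $\mu_U(z)=\mathbb{E}[U|Z=z]$, $\mu_V(z)=\mathbb{E}[V|Z=z]$, $m(z)=\mathbb{E}[K(Z-Z^\dagger)V^\dagger\mid Z=z]$, and $\delta_V=\mathbb{E}[K(Z-Z^\dagger)VU^\dagger]\in\mathbb{R}^{p_v}$. $\mathbb{H}_o$: $\mu_U(Z)=0$ a.s.; $\mathbb{H}_a$: $\mathbb{P}(\mu_U(Z)\ne0)>0$. $K$ has the omnibus property if $\mathrm{GMDD}(U|Z)=0$ exactly when $\mathbb{H}_o$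 holds. Condition 1: if $\mathbb{H}_a$ holds, then $\mathbb{E}[m(Z)\mu_U(Z)]\ne0\in\mathbb{R}^{p_v}$. Condition 2 (first-order non-degeneracy): under $\mathbb{H}_o$, $\mu_V(Z)$ is not almost surely the zero vector. *)

theory Defs
  imports "HOL-Probability.Probability"
begin

definition sigmaZ :: "'a measure \<Rightarrow> ('a \<Rightarrow> 'z::topological_space) \<Rightarrow> 'a measure" where
  "sigmaZ M Z = vimage_algebra (space M) Z borel"

definition muU :: "'a measure \<Rightarrow> ('a \<Rightarrow> real) \<Rightarrow> ('a \<Rightarrow> 'z::topological_space) \<Rightarrow> 'a \<Rightarrow> real" where
  "muU M U Z = real_cond_exp M (sigmaZ M Z) U"

definition muV :: "'a measure \<Rightarrow> ('a \<Rightarrow> 'z::topological_space) \<Rightarrow> ('a \<Rightarrow> 'v::euclidean_space) \<Rightarrow> 'a \<Rightarrow> 'v" where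
  "muV M Z V = (\<lambda>x. \<Sum>b\<in>Basis. real_cond_exp M (sigmaZ M Z) (\<lambda>y. V y \<bullet> b) x *\<^sub>R b)"

definition H0 :: "'a measure \<Rightarrow> ('a \<Rightarrow> real) \<Rightarrow> ('a \<Rightarrow> 'z::topological_space) \<Rightarrow> bool" where
  "H0 M U Z \<longleftrightarrow> (AE x in M. muU M U Z x = 0)"

definition Ha :: "'a measure \<Rightarrow> ('a \<Rightarrow> real) \<Rightarrow> ('a \<Rightarrow> 'z::topological_space) \<Rightarrow> bool" where
  "Ha M U Z \<longleftrightarrow> measure M {x \<in> space M. muU M U Z x \<noteq> 0} > 0"

definition Kfun :: "'z::euclidean_space measure \<Rightarrow> 'z \<Rightarrow> real" where
  "Kfun \<nu> z = (\<integral>s. 1 - cos (z \<bullet> s) \<partial>\<nu>)"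

text \<open>GMDD(U|Z) = - E[U U' K(Z - Z')], (U',Z') an independent copy (product measure)\<close>
definition GMDD :: "'a measure \<Rightarrow> ('a \<Rightarrow> real) \<Rightarrow> ('a \<Rightarrow> 'z::real_vector) \<Rightarrow> ('z \<Rightarrow> real) \<Rightarrow> real" where
  "GMDD M U Z K = - (\<integral>w. U (fst w) * U (snd w) * K (Z (fst w) - Z (snd w)) \<partial>(M \<Otimes>\<^sub>M M))"

definition omnibus :: "('z::euclidean_space \<Rightarrow> real) \<Rightarrow> bool" where
  "omnibus K \<longleftrightarrow> (\<forall>P :: (real \<times> 'z) measure.
     prob_space P \<and> sets P = sets borel \<and> integrable P fst \<and> (\<integral>x. fst x \<partial>P) = 0 \<and>
     integrable (P \<Otimes>\<^sub>M P) (\<lambda>w. fst (fst w) * fst (snd w) * K (snd (fst w) - snd (snd w)))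
     \<longrightarrow> (GMDD P fst snd K = 0 \<longleftrightarrow> H0 P fst snd))"

definition mfun :: "'a measure \<Rightarrow> ('a \<Rightarrow> 'z::real_vector) \<Rightarrow> ('a \<Rightarrow> 'v::euclidean_space) \<Rightarrow> ('z \<Rightarrow> real) \<Rightarrow> 'z \<Rightarrow> 'v" where
  "mfun M Z V K z = (\<integral>b. K (z - Z b) *\<^sub>R V b \<partial>M)"

definition deltaV :: "'a measure \<Rightarrow> ('a \<Rightarrow> real) \<Rightarrow> ('a \<Rightarrow> 'z::real_vector) \<Rightarrow> ('a \<Rightarrow> 'v::euclidean_space) \<Rightarrow> ('z \<Rightarrow> real) \<Rightarrow> 'v" where
  "deltaV M U Z V K = (\<integral>w. (K (Z (fst w) - Z (snd w)) * U (snd w)) *\<^sub>R V (fst w) \<partial>(M \<Otimes>\<^sub>M M))"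

definition cond1 :: "'a measure \<Rightarrow> ('a \<Rightarrow> real) \<Rightarrow> ('a \<Rightarrow> 'z::euclidean_space) \<Rightarrow> ('a \<Rightarrow> 'v::euclidean_space) \<Rightarrow> ('z \<Rightarrow> real) \<Rightarrow> bool" where
  "cond1 M U Z V K \<longleftrightarrow> (Ha M U Z \<longrightarrow> (\<integral>x. muU M U Z x *\<^sub>R mfun M Z V K (Z x) \<partial>M) \<noteq> 0)"

definition cond2 :: "'a measure \<Rightarrow> ('a \<Rightarrow> real) \<Rightarrow> ('a \<Rightarrow> 'z::euclidean_space) \<Rightarrow> ('a \<Rightarrow> 'v::euclidean_space) \<Rightarrow> bool" where
  "cond2 M U Z V \<longleftrightarrow> (H0 M U Z \<longrightarrow> \<not> (AE x in M. muV M Z V x = 0))"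

end

theory Submission imports Defs begin

lemma sq2_int: "(m::int)^2 = 2*n^2 \<Longrightarrow> n = 0"
proof (induction "nat \<bar>n\<bar>" arbitrary: m n rule: less_induct)
  case less
  show ?case
  proof (rule ccontr)
    assume n0: "n \<noteq> 0"
    have "even (m^2)" using less.prems by simp
    then have "even m" by simp
    then obtain k where k: "m = 2*k" by blast
    then have "n^2 = 2*k^2" using less.prems by (simp add: power2_eq_square)
    then have "even (n^2)" by simp
    then have "even n" by simp
    then obtain j where j: "n = 2*j" by blast
    have "k^2 = 2*j^2" using \<open>n^2 = 2*k^2\<close> j by (simp add: power2_eq_square)
    moreover have "nat \<bar>j\<bar> < nat \<bar>n\<bar>" using j n0 by auto
    ultimately have "j = 0" using less.hyps by blast
    with j n0 show False by simp
  qed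
qed

lemma cos_both_one:
  fixes a :: real
  assumes "cos a = 1" "cos (sqrt 2 * a) = 1" shows "a = 0"
proof -
  obtain n :: int where n: "a = of_int n*2*pi" using assms(1) cos_one_2pi_int by blast
  obtain m :: int where m: "sqrt 2 * a = of_int m*2*pi" using assms(2) cos_one_2pi_int by blast
  have "sqrt 2 * of_int n = of_int m" using n m by (simp add: algebra_simps)
  then have "(sqrt 2 * of_int n)^2 = (real_of_int m)^2" by simp
  then have "2 * (real_of_int n)^2 = (real_of_int m)^2" by (simp add: power_mult_distrib)
  then have "real_of_int (m^2) = real_of_int (2*n^2)" by simp
  then have "m^2 = 2*n^2" by (simp only: of_int_eq_iff)
  then have "n = 0" by (rule sq2_int)
  then show ?thesis using n by simp
qed

lemma Kfun_measurable:
  fixes \<nu> :: "'z::euclidean_space measure"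
  assumes sets: "sets \<nu> = sets borel"
    and int: "\<And>z. integrable \<nu> (\<lambda>s. 1 - cos (z \<bullet> s))"
  shows "Kfun \<nu> \<in> borel_measurable borel"
proof -
  define g where "g = (\<lambda>s::'z. \<Sum>b\<in>Basis. (1 - cos (b \<bullet> s)) + (1 - cos ((sqrt 2 *\<^sub>R b) \<bullet> s)))"
  have meas_nu: "borel_measurable \<nu> = borel_measurable borel"
    by (rule measurable_cong_sets[OF sets refl])
  have g_meas'[measurable]: "g \<in> borel_measurable borel" unfolding g_def by measurable
  have g_meas[measurable]: "g \<in> borel_measurable \<nu>" unfolding meas_nu by (rule g_meas')
  have g_int: "integrable \<nu> g" unfolding g_def
    by (intro Bochner_Integration.integrable_sum Bochner_Integration.integrable_add int)
  have g_nonneg: "\<And>s. 0 \<le> g s" unfolding g_def by (intro sum_nonneg add_nonneg_nonneg) (simp_all add: cos_le_one)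
  have g_pos: "0 < g s" if "s \<noteq> 0" for s
  proof -
    have "\<exists>b\<in>Basis. b \<bullet> s \<noteq> 0"
      using that euclidean_all_zero_iff[of s] by (auto simp: inner_commute)
    then obtain b where b: "b \<in> Basis" "b \<bullet> s \<noteq> 0" by blast
    have "\<not> (cos (b \<bullet> s) = 1 \<and> cos (sqrt 2 * (b \<bullet> s)) = 1)"
      using cos_both_one b(2) by blast
    then have "0 < (1 - cos (b \<bullet> s)) + (1 - cos ((sqrt 2 *\<^sub>R b) \<bullet> s))"
      using cos_le_one[of "b \<bullet> s"] cos_le_one[of "sqrt 2 * (b \<bullet> s)"]
      unfolding inner_scaleR_left by linarith
    moreover have "(1 - cos (b \<bullet> s)) + (1 - cos ((sqrt 2 *\<^sub>R b) \<bullet> s)) \<le> g s"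
      unfolding g_def
      apply (rule member_le_sum[OF b(1)])
      subgoal by (intro add_nonneg_nonneg) (simp_all add: cos_le_one)
      by simp
    ultimately show ?thesis by linarith
  qed
  define \<nu>' where "\<nu>' = density \<nu> g"
  have "finite_measure \<nu>'"
  proof
    have sp: "space \<nu>' = space \<nu>" unfolding \<nu>'_def by simp
    have "emeasure \<nu>' (space \<nu>') = (\<integral>\<^sup>+ s. ennreal (g s) * indicator (space \<nu>) s \<partial>\<nu>)"
      unfolding sp unfolding \<nu>'_def by (rule emeasure_density) simp_all
    also have "\<dots> = (\<integral>\<^sup>+ s. ennreal (norm (g s)) \<partial>\<nu>)"
      by (rule nn_integral_cong) (simp add: g_nonneg)
    also have "\<dots> < \<infinity>" using g_int by (simp add: integrable_iff_bounded)
    finally show "emeasure \<nu>' (space \<nu>') \<noteq> \<infinity>" by simp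
  qed
  then interpret F: finite_measure \<nu>' .
  have sets': "sets \<nu>' = sets borel" unfolding \<nu>'_def using sets by simp
  define \<phi> where "\<phi> = (\<lambda>z s. (1 - cos (z \<bullet> s)) / g s)"
  have eq: "g s * \<phi> z s = 1 - cos (z \<bullet> s)" for z s
    using g_pos[of s] unfolding \<phi>_def by (cases "s = 0") auto
  have "Kfun \<nu> = (\<lambda>z. \<integral>s. \<phi> z s \<partial>\<nu>')"
  proof
    fix z
    have "(\<integral>s. \<phi> z s \<partial>\<nu>') = (\<integral>s. g s *\<^sub>R \<phi> z s \<partial>\<nu>)"
      unfolding \<nu>'_def
    proof (rule integral_density)
      show "(\<lambda>s. \<phi> z s) \<in> borel_measurable \<nu>" unfolding meas_nu \<phi>_def by measurable
      show "g \<in> borel_measurable \<nu>" by (rule g_meas)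
      show "AE x in \<nu>. 0 \<le> g x" using g_nonneg by simp
    qed
    then show "Kfun \<nu> z = (\<integral>s. \<phi> z s \<partial>\<nu>')"
      by (simp add: Kfun_def eq)
  qed
  moreover have "(\<lambda>z. \<integral>s. \<phi> z s \<partial>\<nu>') \<in> borel_measurable borel"
  proof (rule F.borel_measurable_lebesgue_integral)
    have "case_prod \<phi> \<in> borel_measurable (borel \<Otimes>\<^sub>M borel)"
      unfolding \<phi>_def by measurable
    then show "case_prod \<phi> \<in> borel_measurable (borel \<Otimes>\<^sub>M \<nu>')"
      by (subst measurable_cong_sets[OF sets_pair_measure_cong[OF refl sets'] refl])
  qed
  ultimately show ?thesis by simp
qed

lemma fst_borel[measurable]: "(fst :: real \<times> 'z::euclidean_space \<Rightarrow> real) \<in> borel_measurable borel"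
  by (rule borel_measurable_continuous_onI) (intro continuous_intros)

lemma snd_borel[measurable]: "(snd :: real \<times> 'z::euclidean_space \<Rightarrow> 'z) \<in> borel_measurable borel"
  by (rule borel_measurable_continuous_onI) (intro continuous_intros)

lemma sfs:
  assumes "prob_space M" and Z[measurable]: "Z \<in> borel_measurable M"
  shows "sigma_finite_subalgebra M (sigmaZ M Z)"
proof -
  interpret prob_space M by fact
  have "subalgebra M (sigmaZ M Z)"
    unfolding subalgebra_def sigmaZ_def
    using sets_image_in_sets[OF refl Z] by simp
  then have "finite_measure_subalgebra M (sigmaZ M Z)"
    by unfold_locales
  then show ?thesis by (rule finite_measure_subalgebra_is_sigma_finite)
qed

lemma Z_sigmaZ: "Z \<in> sigmaZ M Z \<rightarrow>\<^sub>M borel"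
  unfolding sigmaZ_def by (rule measurable_vimage_algebra1) simp

lemma H0_of_ints:
  fixes Z :: "'a \<Rightarrow> 'z::euclidean_space"
  assumes "prob_space M" and Z[measurable]: "Z \<in> borel_measurable M" and U: "integrable M U"
    and ints: "\<And>C. C \<in> sets borel \<Longrightarrow> (\<integral>x. indicator C (Z x) * U x \<partial>M) = 0"
  shows "H0 M U Z"
proof -
  interpret S: sigma_finite_subalgebra M "sigmaZ M Z" using sfs[OF assms(1,2)] .
  have "AE x in M. real_cond_exp M (sigmaZ M Z) U x = (\<lambda>x. 0) x"
  proof (rule S.real_cond_exp_charact)
    fix A assume "A \<in> sets (sigmaZ M Z)"
    then obtain C where C: "C \<in> sets borel" "A = Z -` C \<inter> space M"
      unfolding sigmaZ_def by (subst (asm) sets_vimage_algebra2) auto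
    have "(\<integral>x\<in>A. U x \<partial>M) = (\<integral>x. indicator C (Z x) * U x \<partial>M)"
      unfolding set_lebesgue_integral_def
      by (rule Bochner_Integration.integral_cong) (auto simp: C(2) split: split_indicator)
    also have "\<dots> = 0" using ints[OF C(1)] .
    finally show "(\<integral>x\<in>A. U x \<partial>M) = (\<integral>x\<in>A. (\<lambda>x. 0) x \<partial>M)" by simp
  qed (auto simp: U)
  then show ?thesis unfolding H0_def muU_def by simp
qed

lemma GMDD_ne:
  fixes Z :: "'a \<Rightarrow> 'z::euclidean_space" and K :: "'z \<Rightarrow> real"
  assumes "prob_space M" and Z[measurable]: "Z \<in> borel_measurable M" and U: "integrable M U"
    and EU: "(\<integral>x. U x \<partial>M) = 0"
    and K[measurable]: "K \<in> borel_measurable borel" and om: "omnibus K"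
    and int2: "integrable (M \<Otimes>\<^sub>M M) (\<lambda>w. U (fst w) * U (snd w) * K (Z (fst w) - Z (snd w)))"
    and nH0: "\<not> H0 M U Z"
  shows "GMDD M U Z K \<noteq> 0"
proof -
  interpret prob_space M by fact
  have U_meas[measurable]: "U \<in> borel_measurable M" using U by auto
  define P where "P = distr M borel (\<lambda>x. (U x, Z x))"
  have UZ[measurable]: "(\<lambda>x. (U x, Z x)) \<in> M \<rightarrow>\<^sub>M borel" by measurable
  have PP: "prob_space P" unfolding P_def by (rule prob_space_distr) simp
  then interpret P: prob_space P .
  have setsP: "sets P = sets borel" unfolding P_def by simp
  have intP: "integrable P fst" unfolding P_def
    by (subst integrable_distr_eq) (auto simp: U)
  have EP: "(\<integral>x. fst x \<partial>P) = 0" unfolding P_def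
    by (subst integral_distr) (auto simp: EU)
  have PxP: "P \<Otimes>\<^sub>M P = distr (M \<Otimes>\<^sub>M M) (borel \<Otimes>\<^sub>M borel) (\<lambda>(x, y). ((U x, Z x), (U y, Z y)))"
    unfolding P_def
    by (rule pair_measure_distr) (auto intro: prob_space_imp_sigma_finite PP[unfolded P_def])
  define G where "G = (\<lambda>w::(real \<times> 'z) \<times> (real \<times> 'z). fst (fst w) * fst (snd w) * K (snd (fst w) - snd (snd w)))"
  have G_meas: "G \<in> borel_measurable (borel \<Otimes>\<^sub>M borel)" unfolding G_def by measurable
  have pm: "(\<lambda>(x, y). ((U x, Z x), (U y, Z y))) \<in> M \<Otimes>\<^sub>M M \<rightarrow>\<^sub>M borel \<Otimes>\<^sub>M borel" by measurable
  have Gcomp: "(\<lambda>w. G ((\<lambda>(x, y). ((U x, Z x), (U y, Z y))) w)) = (\<lambda>w. U (fst w) * U (snd w) * K (Z (fst w) - Z (snd w)))"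
    unfolding G_def by (auto simp: case_prod_beta)
  have intPP: "integrable (P \<Otimes>\<^sub>M P) G"
    unfolding PxP by (subst integrable_distr_eq[OF pm G_meas]) (simp add: Gcomp int2)
  have "integral\<^sup>L (P \<Otimes>\<^sub>M P) G = (\<integral>w. U (fst w) * U (snd w) * K (Z (fst w) - Z (snd w)) \<partial>(M \<Otimes>\<^sub>M M))"
    unfolding PxP integral_distr[OF pm G_meas] Gcomp ..
  then have GM: "GMDD P fst snd K = GMDD M U Z K"
    unfolding GMDD_def G_def by simp
  have nH0P: "\<not> H0 P fst snd"
  proof
    assume H: "H0 P fst snd"
    interpret S: sigma_finite_subalgebra P "sigmaZ P snd" by (rule sfs[OF PP]) (simp add: measurable_cong_sets[OF setsP refl])
    have "H0 M U Z"
    proof (rule H0_of_ints[OF assms(1) Z U])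
      fix C :: "'z set" assume C[measurable]: "C \<in> sets borel"
      have ind_meas: "(\<lambda>w. indicator C (snd w) :: real) \<in> borel_measurable (sigmaZ P snd)"
        using measurable_comp[OF Z_sigmaZ[of snd P], of "indicator C" borel] by (simp add: o_def)
      have fst_meas: "fst \<in> borel_measurable P" by (simp add: measurable_cong_sets[OF setsP refl])
      have intI: "integrable P (\<lambda>w. indicator C (snd w) * fst w)"
      proof -
        have "integrable P (\<lambda>w. indicator (snd -` C) w *\<^sub>R fst w)"
          by (rule integrable_mult_indicator[OF _ intP]) (use measurable_sets[OF snd_borel C] in \<open>simp add: setsP\<close>)
        then show ?thesis by (simp add: indicator_def)
      qed
      have "(\<integral>x. indicator C (Z x) * U x \<partial>M) = (\<integral>w. indicator C (snd w) * fst w \<partial>P)"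
        unfolding P_def by (subst integral_distr) auto
      also have "\<dots> = (\<integral>w. indicator C (snd w) * real_cond_exp P (sigmaZ P snd) fst w \<partial>P)"
        by (rule S.real_cond_exp_intg(2)[OF intI ind_meas fst_meas, symmetric])
      also have "\<dots> = (\<integral>w. 0 \<partial>P)"
      proof (rule integral_cong_AE)
        have "(\<lambda>w. indicator C (snd w) :: real) \<in> borel_measurable P"
          by (rule measurable_from_subalg[OF S.subalg ind_meas])
        then show "(\<lambda>w. indicator C (snd w) * real_cond_exp P (sigmaZ P snd) fst w) \<in> borel_measurable P"
          using borel_measurable_cond_exp2 by (rule borel_measurable_times)
        show "(\<lambda>w. 0::real) \<in> borel_measurable P" by simp
        show "AE w in P. indicator C (snd w) * real_cond_exp P (sigmaZ P snd) fst w = 0"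
          using H unfolding H0_def muU_def by (auto elim!: AE_mp)
      qed
      finally show "(\<integral>x. indicator C (Z x) * U x \<partial>M) = 0" by simp
    qed
    with nH0 show False by simp
  qed
  have "GMDD P fst snd K = 0 \<longleftrightarrow> H0 P fst snd"
    using om PP setsP intP EP intPP unfolding omnibus_def G_def by blast
  with nH0P GM show ?thesis by simp
qed

theorem lemma1:
  fixes M :: "'a measure" and U :: "'a \<Rightarrow> real" and Z :: "'a \<Rightarrow> 'z::euclidean_space"
    and \<nu> :: "'z measure" and h :: "'z \<Rightarrow> real" and V :: "'a \<Rightarrow> real \<times> real"
  assumes "prob_space M"
    and "sets \<nu> = sets borel"
    and "distr \<nu> borel uminus = \<nu>"
    and "\<And>z. integrable \<nu> (\<lambda>s. 1 - cos (z \<bullet> s))"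
    and "omnibus (Kfun \<nu>)"
    and "Z \<in> borel_measurable M"
    and "integrable M U" and "(\<integral>x. U x \<partial>M) = 0"
    and "h \<in> borel_measurable borel"
    and "\<not> (\<exists>c. AE x in M. h (Z x) = c)"
    and V_def: "V = (\<lambda>x. (h (Z x), U x - h (Z x)))"
    and "integrable M (\<lambda>x. h (Z x))"
    and "integrable (M \<Otimes>\<^sub>M M) (\<lambda>w. U (fst w) * U (snd w) * Kfun \<nu> (Z (fst w) - Z (snd w)))"
    and "integrable (M \<Otimes>\<^sub>M M) (\<lambda>w. (Kfun \<nu> (Z (fst w) - Z (snd w)) * U (snd w)) *\<^sub>R V (fst w))"
    and "\<And>x. x \<in> space M \<Longrightarrow> integrable M (\<lambda>y. Kfun \<nu> (Z x - Z y) *\<^sub>R V y)"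
    and "integrable M (\<lambda>x. U x *\<^sub>R mfun M Z V (Kfun \<nu>) (Z x))"
    and "integrable M (\<lambda>x. muU M U Z x *\<^sub>R mfun M Z V (Kfun \<nu>) (Z x))"
  shows "cond1 M U Z V (Kfun \<nu>) \<and> cond2 M U Z V
         \<and> (Ha M U Z \<longrightarrow> deltaV M U Z V (Kfun \<nu>) \<noteq> 0)"
proof -
  note prob = assms(1)
  interpret prob_space M by (rule prob)
  note K_meas[measurable] = Kfun_measurable[OF assms(2,4)]
  note Z_meas[measurable] = assms(6)
  note h_meas[measurable] = assms(9)
  have U_meas[measurable]: "U \<in> borel_measurable M" using assms(7) by auto
  interpret S: sigma_finite_subalgebra M "sigmaZ M Z" using sfs[OF prob Z_meas] .
  define T where "T = (\<lambda>p::real \<times> real. fst p + snd p)"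
  have Tscale: "T (r *\<^sub>R p) = r * T p" for r p unfolding T_def by (simp add: algebra_simps)
  have T0: "T p \<noteq> 0 \<Longrightarrow> p \<noteq> 0" for p unfolding T_def by auto
  have blT: "bounded_linear T" unfolding T_def
    by (intro bounded_linear_add bounded_linear_fst bounded_linear_snd)
  define I where "I = (\<integral>w. U (fst w) * U (snd w) * Kfun \<nu> (Z (fst w) - Z (snd w)) \<partial>(M \<Otimes>\<^sub>M M))"
  have I_ne: "I \<noteq> 0" if Ha: "Ha M U Z"
  proof -
    have nH0: "\<not> H0 M U Z"
    proof
      assume H0: "H0 M U Z"
      define N where "N = {x \<in> space M. muU M U Z x \<noteq> 0}"
      have N_sets: "N \<in> sets M" unfolding N_def muU_def by measurable
      have "emeasure M N = 0"
        using H0 AE_iff_measurable[OF N_sets] unfolding H0_def N_def by auto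
      then have "measure M N = 0" by (simp add: measure_def)
      with Ha show False unfolding Ha_def N_def by simp
    qed
    have "GMDD M U Z (Kfun \<nu>) \<noteq> 0"
      by (rule GMDD_ne[OF prob Z_meas assms(7,8) K_meas assms(5,13) nH0])
    then show ?thesis unfolding GMDD_def I_def by simp
  qed
  have delta: "T (deltaV M U Z V (Kfun \<nu>)) = I"
  proof -
    have "T (deltaV M U Z V (Kfun \<nu>)) = (\<integral>w. T ((Kfun \<nu> (Z (fst w) - Z (snd w)) * U (snd w)) *\<^sub>R V (fst w)) \<partial>(M \<Otimes>\<^sub>M M))"
      unfolding deltaV_def by (rule integral_bounded_linear[OF blT assms(14), symmetric])
    also have "\<dots> = I" unfolding I_def
      by (rule Bochner_Integration.integral_cong) (simp_all add: T_def V_def algebra_simps)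
    finally show ?thesis .
  qed
  define s where "s = (\<lambda>z. \<integral>y. Kfun \<nu> (z - Z y) * U y \<partial>M)"
  have s_meas[measurable]: "s \<in> borel_measurable borel"
    unfolding s_def by measurable
  have Tm: "T (mfun M Z V (Kfun \<nu>) (Z x)) = s (Z x)" if x: "x \<in> space M" for x
  proof -
    have "T (mfun M Z V (Kfun \<nu>) (Z x)) = (\<integral>y. T (Kfun \<nu> (Z x - Z y) *\<^sub>R V y) \<partial>M)"
      unfolding mfun_def by (rule integral_bounded_linear[OF blT assms(15)[OF x], symmetric])
    also have "\<dots> = s (Z x)" unfolding s_def
      by (rule Bochner_Integration.integral_cong) (simp_all add: T_def V_def algebra_simps)
    finally show ?thesis .
  qed
  have c1: "T (\<integral>x. muU M U Z x *\<^sub>R mfun M Z V (Kfun \<nu>) (Z x) \<partial>M) = I"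
  proof -
    have sZ_F: "(\<lambda>x. s (Z x)) \<in> borel_measurable (sigmaZ M Z)"
      using measurable_comp[OF Z_sigmaZ[of Z M] s_meas] by (simp add: o_def)
    have intsU: "integrable M (\<lambda>x. s (Z x) * U x)"
    proof -
      have "integrable M (\<lambda>x. T (U x *\<^sub>R mfun M Z V (Kfun \<nu>) (Z x)))"
        by (rule integrable_bounded_linear[OF blT assms(16)])
      moreover have "T (U x *\<^sub>R mfun M Z V (Kfun \<nu>) (Z x)) = s (Z x) * U x" if "x \<in> space M" for x
        using Tm[OF that] by (simp add: Tscale mult.commute)
      ultimately show ?thesis
        using Bochner_Integration.integrable_cong[OF refl, of M "\<lambda>x. T (U x *\<^sub>R mfun M Z V (Kfun \<nu>) (Z x))" "\<lambda>x. s (Z x) * U x"]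
        by simp
    qed
    have "T (\<integral>x. muU M U Z x *\<^sub>R mfun M Z V (Kfun \<nu>) (Z x) \<partial>M)
        = (\<integral>x. T (muU M U Z x *\<^sub>R mfun M Z V (Kfun \<nu>) (Z x)) \<partial>M)"
      by (rule integral_bounded_linear[OF blT assms(17), symmetric])
    also have "\<dots> = (\<integral>x. s (Z x) * real_cond_exp M (sigmaZ M Z) U x \<partial>M)"
      by (rule Bochner_Integration.integral_cong)
         (simp_all add: Tm Tscale mult.commute muU_def)
    also have "\<dots> = (\<integral>x. s (Z x) * U x \<partial>M)"
      by (rule S.real_cond_exp_intg(2)[OF intsU sZ_F U_meas])
    also have "\<dots> = (\<integral>x. (\<integral>y. U x * U y * Kfun \<nu> (Z x - Z y) \<partial>M) \<partial>M)"
    proof (rule Bochner_Integration.integral_cong[OF refl])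
      fix x assume "x \<in> space M"
      have "(\<integral>y. U x * U y * Kfun \<nu> (Z x - Z y) \<partial>M) = (\<integral>y. (Kfun \<nu> (Z x - Z y) * U y) * U x \<partial>M)"
        by (rule Bochner_Integration.integral_cong) (simp_all add: mult_ac)
      also have "\<dots> = s (Z x) * U x" unfolding s_def by (rule integral_mult_left_zero)
      finally show "s (Z x) * U x = (\<integral>y. U x * U y * Kfun \<nu> (Z x - Z y) \<partial>M)" by simp
    qed
    also have "\<dots> = I"
    proof -
      interpret PS: pair_sigma_finite M M
        by (simp add: pair_sigma_finite_def prob_space_imp_sigma_finite prob)
      show ?thesis unfolding I_def
        using PS.integral_fst'[OF assms(13)] by simp
    qed
    finally show ?thesis .
  qed
  have cond2: "cond2 M U Z V"
    unfolding cond2_def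
  proof (intro impI notI)
    assume AE0: "AE x in M. muV M Z V x = 0"
    have fstm: "fst (muV M Z V x) = real_cond_exp M (sigmaZ M Z) (\<lambda>y. h (Z y)) x" for x
      by (simp add: muV_def Basis_prod_def V_def fst_sum)
    have hZ_F: "(\<lambda>x. h (Z x)) \<in> borel_measurable (sigmaZ M Z)"
      using measurable_comp[OF Z_sigmaZ[of Z M] h_meas] by (simp add: o_def)
    have "AE x in M. real_cond_exp M (sigmaZ M Z) (\<lambda>y. h (Z y)) x = h (Z x)"
      by (rule S.real_cond_exp_F_meas[OF assms(12) hZ_F])
    with AE0 have "AE x in M. h (Z x) = 0"
      by eventually_elim (metis fstm fst_zero)
    with assms(10) show False by blast
  qed
  show ?thesis
    unfolding cond1_def
    using I_ne c1 delta cond2 T0 by metis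
qed
end
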